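(* Let $(K_n,\Sigma)$ be a signed complete graph with $n\geq4$. For a sign $\Gamma\subseteq E(K_n)$, let $X(\Gamma)$ be the set of edges $vw$ of $K_n$ such that the triangle $uvw$ is even in $(K_n,\Gamma)$ for every $u\in V(K_n)\setminus\{v,w\}$, and let $Y(\Gamma)$ be the set of edges $vw$ of $K_n$ such that for every $u\in V(K_n)\setminus\{v,w\}$, $uvw$ is odd in $(K_n,\Gamma)$ and the number of odd triangles of $(K_n,\Gamma)$ containing $u$ and $v$ is one more than the number of even triangles of $(K_n,\Gamma)$ containing $u$ and $v$. If $Y(\Sigma)\neq\emptyset$, then $X(\Sigma)\cup Y(\Sigma)=X(\Sigma\triangle Y(\Sigma))$ and $Y(\Sigma\triangle Y(\Sigma))=\emptyset$.
   Context: A signed graph is a pair $(G,\Sigma)$ with $G$ a finite simple graph and $\Sigma\subseteq E(G)$ (the odd edges). A triangle $uvw$ is odd (resp. even) in $(G,\Sigma)$ if $|\Sigma\cap\{uv,uw,vw\}|$ is odd (resp. even). $\triangle$ denotes symmetric difference. *)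

theory Defs
  imports Main
begin

text \<open>Complete graph K_V on a finite vertex set V; edges are 2-element sets.
  A sign is a set of edges (the odd edges).\<close>

definition Kedges :: "'a set \<Rightarrow> 'a set set" where
  "Kedges V = {e. \<exists>v w. v \<in> V \<and> w \<in> V \<and> v \<noteq> w \<and> e = {v, w}}"

definition symdiff :: "'b set \<Rightarrow> 'b set \<Rightarrow> 'b set" (infixl "\<triangle>" 65) where
  "A \<triangle> B = (A - B) \<union> (B - A)"

definition odd_tri :: "'a set set \<Rightarrow> 'a \<Rightarrow> 'a \<Rightarrow> 'a \<Rightarrow> bool" where
  "odd_tri \<Gamma> u v w \<longleftrightarrow> odd (card (\<Gamma> \<inter> {{u, v}, {u, w}, {v, w}}))"

definition even_tri :: "'a set set \<Rightarrow> 'a \<Rightarrow> 'a \<Rightarrow> 'a \<Rightarrow> bool" where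
  "even_tri \<Gamma> u v w \<longleftrightarrow> even (card (\<Gamma> \<inter> {{u, v}, {u, w}, {v, w}}))"

definition n_odd :: "'a set \<Rightarrow> 'a set set \<Rightarrow> 'a \<Rightarrow> 'a \<Rightarrow> nat" where
  "n_odd V \<Gamma> u v = card {x \<in> V - {u, v}. odd_tri \<Gamma> u v x}"

definition n_even :: "'a set \<Rightarrow> 'a set set \<Rightarrow> 'a \<Rightarrow> 'a \<Rightarrow> nat" where
  "n_even V \<Gamma> u v = card {x \<in> V - {u, v}. even_tri \<Gamma> u v x}"

definition Xset :: "'a set \<Rightarrow> 'a set set \<Rightarrow> 'a set set" where
  "Xset V \<Gamma> = {e \<in> Kedges V. \<exists>v w. e = {v, w} \<and> v \<noteq> w \<and>
      (\<forall>u \<in> V - {v, w}. even_tri \<Gamma> u v w)}"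

definition Yset :: "'a set \<Rightarrow> 'a set set \<Rightarrow> 'a set set" where
  "Yset V \<Gamma> = {e \<in> Kedges V. \<exists>v w. e = {v, w} \<and> v \<noteq> w \<and>
      (\<forall>u \<in> V - {v, w}. odd_tri \<Gamma> u v w \<and> n_odd V \<Gamma> u v = n_even V \<Gamma> u v + 1)}"

end

theory Submission imports Defs begin

lemma symdiff_iff: "x \<in> A \<triangle> B \<longleftrightarrow> ((x \<in> A) \<noteq> (x \<in> B))"
  unfolding symdiff_def by auto

lemma tri_xor:
  assumes "u \<noteq> v" "u \<noteq> w" "v \<noteq> w"
  shows "odd_tri G u v w \<longleftrightarrow> (({u,v}\<in>G) \<noteq> (({u,w}\<in>G) \<noteq> ({v,w}\<in>G)))"
proof -
  have d: "{u,v} \<noteq> {u,w}" "{u,v} \<noteq> {v,w}" "{u,w} \<noteq> {v,w}"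
    using assms by (auto simp: doubleton_eq_iff)
  show ?thesis unfolding odd_tri_def using d
    by (cases "{u,v}\<in>G"; cases "{u,w}\<in>G"; cases "{v,w}\<in>G") (auto simp: Int_insert_left)
qed

lemma odd_tri_perm1: "odd_tri G u v w = odd_tri G v u w"
proof -
  have "{{u,v},{u,w},{v,w}} = {{v,u},{v,w},{u,w}}" by (simp add: insert_commute)
  then show ?thesis unfolding odd_tri_def by simp
qed

lemma odd_tri_perm2: "odd_tri G u v w = odd_tri G u w v"
proof -
  have "{{u,v},{u,w},{v,w}} = {{u,w},{u,v},{w,v}}" by (simp add: insert_commute)
  then show ?thesis unfolding odd_tri_def by simp
qed

lemma even_tri_iff: "even_tri G u v w \<longleftrightarrow> \<not> odd_tri G u v w"
  unfolding odd_tri_def even_tri_def by simp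

lemma cocycle:
  assumes "distinct [a,b,c,d]"
  shows "odd_tri G a b c = (odd_tri G a b d = (odd_tri G a c d = odd_tri G b c d))"
proof -
  have e: "{b,a} = {a,b}" "{c,a} = {a,c}" "{d,a} = {a,d}" "{c,b} = {b,c}" "{d,b} = {b,d}" "{d,c} = {c,d}"
    by auto
  have d: "a\<noteq>b" "a\<noteq>c" "a\<noteq>d" "b\<noteq>c" "b\<noteq>d" "c\<noteq>d" using assms by auto
  show ?thesis
    unfolding tri_xor[OF d(1,2,4)] tri_xor[OF d(1,3,5)] tri_xor[OF d(2,3,6)] tri_xor[OF d(4,5,6)]
    by argo
qed

lemma n_odd_sym: "n_odd V G u v = n_odd V G v u"
proof -
  have "{x \<in> V - {u, v}. odd_tri G u v x} = {x \<in> V - {v, u}. odd_tri G v u x}"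
  proof -
    have "V - {u,v} = V - {v,u}" by auto
    moreover have "\<And>x. odd_tri G u v x = odd_tri G v u x" by (rule odd_tri_perm1)
    ultimately show ?thesis by simp
  qed
  then show ?thesis unfolding n_odd_def by simp
qed

lemma n_sum:
  assumes "finite V" "u \<in> V" "v \<in> V" "u \<noteq> v"
  shows "n_odd V G u v + n_even V G u v + 2 = card V"
proof -
  have "card {x \<in> V - {u, v}. odd_tri G u v x} + card {x \<in> V - {u, v}. even_tri G u v x}
      = card (V - {u,v})"
    using assms(1) by (subst card_Un_disjoint[symmetric]) (auto simp: even_tri_iff intro: arg_cong[where f=card])
  also have "\<dots> = card V - 2" using assms by (simp add: card_Diff_subset)
  moreover have "card {u,v} \<le> card V" using assms by (intro card_mono) auto
  ultimately show ?thesis unfolding n_odd_def n_even_def using assms by simp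
qed

definition allodd :: "'a set \<Rightarrow> 'a set set \<Rightarrow> 'a \<Rightarrow> 'a \<Rightarrow> bool" where
  "allodd V G v w \<longleftrightarrow> (\<forall>u\<in>V-{v,w}. odd_tri G u v w)"

lemma twin:
  assumes "finite V" "v \<in> V" "w \<in> V" "v \<noteq> w" "u \<in> V - {v,w}"
    and ao: "\<forall>x\<in>V-{v,w}. odd_tri G x v w"
  shows "n_odd V G u v = n_odd V G u w"
proof -
  let ?A = "{x \<in> V - {u, v}. odd_tri G u v x}"
  let ?B = "{x \<in> V - {u, w}. odd_tri G u w x}"
  let ?f = "\<lambda>x. if x = w then v else x"
  let ?g = "\<lambda>x. if x = v then w else x"
  have key: "odd_tri G u v x = odd_tri G u w x" if "x \<in> V - {u,v,w}" for x
  proof -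
    have "distinct [u,v,w,x]" using that assms by auto
    from cocycle[OF this, of G] have "odd_tri G u v w = (odd_tri G u v x = (odd_tri G u w x = odd_tri G v w x))" .
    moreover have "odd_tri G u v w" using ao assms by auto
    moreover have "odd_tri G v w x" using ao that odd_tri_perm1[of G x v w] odd_tri_perm2[of G v x w] by auto
    ultimately show ?thesis by blast
  qed
  have uvw: "odd_tri G u v w" using ao assms by auto
  have "bij_betw ?f ?A ?B"
  proof (rule bij_betw_byWitness[where f'="?g"])
    show "\<forall>a\<in>?A. ?g (?f a) = a" using assms by auto
    show "\<forall>a\<in>?B. ?f (?g a) = a" using assms by auto
    show "?f ` ?A \<subseteq> ?B"
    proof
      fix y assume "y \<in> ?f ` ?A"
      then obtain x where x: "x \<in> ?A" "y = ?f x" by blast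
      show "y \<in> ?B"
      proof (cases "x = w")
        case True then show ?thesis using x assms uvw odd_tri_perm2[of G u v w] by auto
      next
        case False then show ?thesis using x assms key by auto
      qed
    qed
    show "?g ` ?B \<subseteq> ?A"
    proof
      fix y assume "y \<in> ?g ` ?B"
      then obtain x where x: "x \<in> ?B" "y = ?g x" by blast
      show "y \<in> ?A"
      proof (cases "x = v")
        case True then show ?thesis using x assms uvw odd_tri_perm2[of G u v w] by auto
      next
        case False then show ?thesis using x assms key by auto
      qed
    qed
  qed
  then show ?thesis unfolding n_odd_def by (rule bij_betw_same_card)
qed


lemma odd_tri_cyc: "odd_tri G u v w = odd_tri G v w u"
  by (metis odd_tri_perm1 odd_tri_perm2)

lemma n_odd_cong:
  assumes "\<forall>x\<in>V-{u,v}. odd_tri G u v x \<longleftrightarrow> x \<in> T" "T \<subseteq> V - {u,v}"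
  shows "n_odd V G u v = card T"
proof -
  have "{x \<in> V - {u, v}. odd_tri G u v x} = T" using assms by blast
  then show ?thesis unfolding n_odd_def by simp
qed

definition Yg :: "'a set \<Rightarrow> 'a set set \<Rightarrow> 'a \<Rightarrow> 'a \<Rightarrow> bool" where
  "Yg V G v w \<longleftrightarrow> v \<in> V \<and> w \<in> V \<and> v \<noteq> w \<and> (\<forall>u\<in>V-{v,w}. odd_tri G u v w \<and>
     2 * n_odd V G u v + 1 = card V \<and> 2 * n_odd V G u w + 1 = card V)"

definition Xg :: "'a set \<Rightarrow> 'a set set \<Rightarrow> 'a \<Rightarrow> 'a \<Rightarrow> bool" where
  "Xg V G v w \<longleftrightarrow> v \<in> V \<and> w \<in> V \<and> v \<noteq> w \<and> (\<forall>u\<in>V-{v,w}. \<not> odd_tri G u v w)"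

lemma Yg_sym: "Yg V G v w \<longleftrightarrow> Yg V G w v"
proof -
  have "V - {v,w} = V - {w,v}" by auto
  moreover have "\<And>u. odd_tri G u v w = odd_tri G u w v" by (rule odd_tri_perm2)
  ultimately show ?thesis unfolding Yg_def by auto
qed

lemma Xg_sym: "Xg V G v w \<longleftrightarrow> Xg V G w v"
proof -
  have "V - {v,w} = V - {w,v}" by auto
  moreover have "\<And>u. odd_tri G u v w = odd_tri G u w v" by (rule odd_tri_perm2)
  ultimately show ?thesis unfolding Xg_def by auto
qed

lemma Kedges_mem: "{v,w} \<in> Kedges V \<Longrightarrow> v \<in> V \<and> w \<in> V \<and> v \<noteq> w"
  unfolding Kedges_def by (auto simp: doubleton_eq_iff)

lemma Kedges_I: "v \<in> V \<Longrightarrow> w \<in> V \<Longrightarrow> v \<noteq> w \<Longrightarrow> {v,w} \<in> Kedges V"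
  unfolding Kedges_def by blast

lemma Yg_from:
  assumes fin: "finite V" and "p \<in> V" "q \<in> V" "p \<noteq> q"
    and h: "\<forall>u\<in>V-{p,q}. odd_tri G u p q \<and> n_odd V G u p = n_even V G u p + 1"
  shows "Yg V G p q"
  unfolding Yg_def
proof (intro conjI ballI)
  fix u assume u: "u \<in> V - {p,q}"
  show "odd_tri G u p q" using h u by blast
  have s: "n_odd V G u p + n_even V G u p + 2 = card V" using n_sum[OF fin, of u p G] u assms by auto
  show a: "2 * n_odd V G u p + 1 = card V" using s h u by auto
  have "n_odd V G u p = n_odd V G u q"
    by (rule twin[OF fin assms(2,3,4) u]) (use h in blast)
  then show "2 * n_odd V G u q + 1 = card V" using a by simp
qed (use assms in auto)

lemma Yset_D:
  assumes fin: "finite V" and a: "{v,w} \<in> Yset V G"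
  shows "Yg V G v w"
proof -
  have "\<exists>p q. {v,w} = {p,q} \<and> p \<noteq> q \<and> (\<forall>u\<in>V-{p,q}. odd_tri G u p q \<and> n_odd V G u p = n_even V G u p + 1)"
    using a unfolding Yset_def mem_Collect_eq by (rule conjunct2)
  then obtain p q where pq: "{v,w} = {p,q}" "p \<noteq> q"
    and h: "\<forall>u\<in>V-{p,q}. odd_tri G u p q \<and> n_odd V G u p = n_even V G u p + 1"
    by blast
  have k: "{p,q} \<in> Kedges V" using a pq(1) unfolding Yset_def by simp
  have "p \<in> V" "q \<in> V" using Kedges_mem[OF k] by auto
  then have "Yg V G p q" using Yg_from[OF fin _ _ pq(2) h] by auto
  moreover have "(v=p \<and> w=q) \<or> (v=q \<and> w=p)" using pq(1) by (simp add: doubleton_eq_iff)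
  ultimately show "Yg V G v w" using Yg_sym[of V G p q] by auto
qed

lemma Yset_I:
  assumes fin: "finite V" and y: "Yg V G v w"
  shows "{v,w} \<in> Yset V G"
proof -
  have vw: "v \<in> V" "w \<in> V" "v \<noteq> w" using y unfolding Yg_def by auto
  have h: "\<forall>u\<in>V-{v,w}. odd_tri G u v w \<and> n_odd V G u v = n_even V G u v + 1"
  proof
    fix u assume u: "u \<in> V-{v,w}"
    have uu: "u \<in> V" "u \<noteq> v" using u by auto
    have s: "n_odd V G u v + n_even V G u v + 2 = card V" by (rule n_sum[OF fin uu(1) vw(1) uu(2)])
    have all: "\<forall>u\<in>V-{v,w}. odd_tri G u v w \<and> 2*n_odd V G u v + 1 = card V \<and> 2*n_odd V G u w + 1 = card V"
      using y unfolding Yg_def by (elim conjE)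
    have "odd_tri G u v w \<and> 2*n_odd V G u v + 1 = card V \<and> 2*n_odd V G u w + 1 = card V"
      using all u by (rule bspec)
    then show "odd_tri G u v w \<and> n_odd V G u v = n_even V G u v + 1" using s by linarith
  qed
  have k: "{v,w} \<in> Kedges V" by (rule Kedges_I[OF vw])
  show "{v,w} \<in> Yset V G" unfolding Yset_def mem_Collect_eq
    by (intro conjI k exI[of _ v] exI[of _ w] refl vw(3) h)
qed

lemma Yset_iff:
  assumes fin: "finite V"
  shows "{v,w} \<in> Yset V G \<longleftrightarrow> Yg V G v w"
  by (rule iffI) (erule Yset_D[OF fin], erule Yset_I[OF fin])

lemma Yset_elem:
  assumes "finite V" "e \<in> Yset V G"
  shows "\<exists>v w. e = {v,w} \<and> Yg V G v w"
proof -
  have "\<exists>v w. e = {v,w} \<and> v \<noteq> w \<and> (\<forall>u\<in>V-{v,w}. odd_tri G u v w \<and> n_odd V G u v = n_even V G u v + 1)"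
    using assms(2) unfolding Yset_def mem_Collect_eq by (rule conjunct2)
  then obtain v w where e: "e = {v,w}" by blast
  have "Yg V G v w" by (rule Yset_D[OF assms(1)]) (use assms(2) e in simp)
  then show ?thesis using e by blast
qed

lemma Xset_D:
  assumes a: "{v,w} \<in> Xset V G"
  shows "Xg V G v w"
proof -
  have "\<exists>p q. {v,w} = {p,q} \<and> p \<noteq> q \<and> (\<forall>u\<in>V-{p,q}. even_tri G u p q)"
    using a unfolding Xset_def mem_Collect_eq by (rule conjunct2)
  then obtain p q where pq: "{v,w} = {p,q}" "p \<noteq> q"
    and h: "\<forall>u\<in>V-{p,q}. even_tri G u p q"
    by blast
  have k: "{p,q} \<in> Kedges V" using a pq(1) unfolding Xset_def by simp
  have "p \<in> V" "q \<in> V" using Kedges_mem[OF k] by auto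
  moreover have "\<forall>u\<in>V-{p,q}. \<not> odd_tri G u p q" using h unfolding even_tri_iff .
  ultimately have "Xg V G p q" unfolding Xg_def using pq(2) by (intro conjI)
  moreover have "(v=p \<and> w=q) \<or> (v=q \<and> w=p)" using pq(1) by (simp add: doubleton_eq_iff)
  ultimately show "Xg V G v w" using Xg_sym[of V G p q] by auto
qed

lemma Xset_I:
  assumes x: "Xg V G v w"
  shows "{v,w} \<in> Xset V G"
proof -
  have c: "v \<in> V \<and> w \<in> V \<and> v \<noteq> w \<and> (\<forall>u\<in>V-{v,w}. \<not> odd_tri G u v w)"
    using x unfolding Xg_def .
  have vw: "v \<in> V" "w \<in> V" "v \<noteq> w" using c by simp_all
  have h0: "\<forall>u\<in>V-{v,w}. \<not> odd_tri G u v w" using c by (elim conjE)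
  have h: "\<forall>u\<in>V-{v,w}. even_tri G u v w" using h0 unfolding even_tri_iff .
  have k: "{v,w} \<in> Kedges V" by (rule Kedges_I[OF vw])
  show "{v,w} \<in> Xset V G" unfolding Xset_def mem_Collect_eq
    by (intro conjI k exI[of _ v] exI[of _ w] refl vw(3) h)
qed

lemma Xset_iff: "{v,w} \<in> Xset V G \<longleftrightarrow> Xg V G v w"
  by (rule iffI) (erule Xset_D, erule Xset_I)

lemma Xset_elem:
  assumes "e \<in> Xset V G"
  shows "\<exists>v w. e = {v,w} \<and> Xg V G v w"
proof -
  have "\<exists>v w. e = {v,w} \<and> v \<noteq> w \<and> (\<forall>u\<in>V-{v,w}. even_tri G u v w)"
    using assms unfolding Xset_def mem_Collect_eq by (rule conjunct2)
  then obtain v w where e: "e = {v,w}" by blast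
  have "Xg V G v w" by (rule Xset_D) (use assms e in simp)
  then show ?thesis using e by blast
qed


lemma Yg_V: "Yg V G v w \<Longrightarrow> v \<in> V \<and> w \<in> V \<and> v \<noteq> w"
  unfolding Yg_def by (elim conjE) (intro conjI)

lemma Yg_all: "Yg V G v w \<Longrightarrow> \<forall>u\<in>V-{v,w}. odd_tri G u v w \<and> 2 * n_odd V G u v + 1 = card V \<and> 2 * n_odd V G u w + 1 = card V"
  unfolding Yg_def by (elim conjE)

lemma Yg_odd: "Yg V G v w \<Longrightarrow> u \<in> V \<Longrightarrow> u \<noteq> v \<Longrightarrow> u \<noteq> w \<Longrightarrow> odd_tri G u v w"
proof -
  assume a: "Yg V G v w" "u \<in> V" "u \<noteq> v" "u \<noteq> w"
  have "u \<in> V - {v,w}" using a by simp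
  then show ?thesis using Yg_all[OF a(1)] by (elim bspec[elim_format] conjE)
qed

lemma Yg_cnt: "Yg V G v w \<Longrightarrow> u \<in> V \<Longrightarrow> u \<noteq> v \<Longrightarrow> u \<noteq> w \<Longrightarrow> 2 * n_odd V G u v + 1 = card V"
proof -
  assume a: "Yg V G v w" "u \<in> V" "u \<noteq> v" "u \<noteq> w"
  have "u \<in> V - {v,w}" using a by simp
  then show ?thesis using Yg_all[OF a(1)] by (elim bspec[elim_format] conjE)
qed

lemma Xg_V: "Xg V G v w \<Longrightarrow> v \<in> V \<and> w \<in> V \<and> v \<noteq> w"
  unfolding Xg_def by (elim conjE) (intro conjI)

lemma Xg_even: "Xg V G v w \<Longrightarrow> u \<in> V \<Longrightarrow> u \<noteq> v \<Longrightarrow> u \<noteq> w \<Longrightarrow> \<not> odd_tri G u v w"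
  unfolding Xg_def by auto

lemma card4_le: "card {a,b,c,d::'a} \<le> 4"
  by (simp add: card_insert_if)

context
  fixes V :: "'a set" and S :: "'a set set"
  assumes fin: "finite V" and n4: "card V \<ge> 4"
begin

lemma F1:
  assumes ab: "Yg V S a b" and ac: "Yg V S a c" and bc: "b \<noteq> c"
  shows False
proof -
  have A: "a \<in> V" "b \<in> V" "a \<noteq> b" using Yg_V[OF ab] by auto
  have B: "c \<in> V" "a \<noteq> c" using Yg_V[OF ac] by auto
  have cab: "odd_tri S c a b" by (rule Yg_odd[OF ab B(1)]) (use B bc in auto)
  have all: "\<forall>x\<in>V-{b,c}. odd_tri S b c x \<longleftrightarrow> x \<in> V - {b,c}"
  proof
    fix x assume x: "x \<in> V - {b,c}"
    show "odd_tri S b c x \<longleftrightarrow> x \<in> V - {b,c}"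
    proof (cases "x = a")
      case True then show ?thesis using cab x by (metis odd_tri_cyc)
    next
      case False
      have d: "distinct [a,b,c,x]" using x False A B bc by auto
      have "odd_tri S x a b" by (rule Yg_odd[OF ab]) (use x False in auto)
      then have 1: "odd_tri S a b x" by (metis odd_tri_cyc)
      have "odd_tri S x a c" by (rule Yg_odd[OF ac]) (use x False in auto)
      then have 2: "odd_tri S a c x" by (metis odd_tri_cyc)
      have 3: "odd_tri S a b c" using cab by (metis odd_tri_cyc)
      show ?thesis using cocycle[OF d, of S] 1 2 3 x by auto
    qed
  qed
  have "n_odd V S b c = card (V - {b,c})" by (rule n_odd_cong[OF all]) simp
  also have "\<dots> = card V - 2" using A B fin bc by (simp add: card_Diff_subset)
  finally have e1: "n_odd V S b c = card V - 2" .
  have "Yg V S b a" using ab Yg_sym by metis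
  then have "2 * n_odd V S c b + 1 = card V" by (rule Yg_cnt) (use B bc in auto)
  then show False using e1 n_odd_sym[of V S c b] n4 by simp
qed

lemma tT:
  assumes "u \<noteq> v" "u \<noteq> w" "v \<noteq> w"
  shows "odd_tri (S \<triangle> Yset V S) u v w \<longleftrightarrow>
     (odd_tri S u v w \<noteq> (Yg V S u v \<noteq> (Yg V S u w \<noteq> Yg V S v w)))"
  unfolding tri_xor[OF assms] symdiff_iff Yset_iff[OF fin] by argo


lemma P1:
  assumes x: "Xg V S v w"
  shows "Xg V (S \<triangle> Yset V S) v w"
proof -
  have vw: "v \<in> V" "w \<in> V" "v \<noteq> w" using Xg_V[OF x] by auto
  have "\<not> odd_tri (S \<triangle> Yset V S) u v w" if u: "u \<in> V - {v,w}" for u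
  proof -
    have e: "\<not> odd_tri S u v w" using Xg_even[OF x] u by auto
    have 1: "\<not> Yg V S v w" using Yg_odd[of V S v w u] e u by auto
    have 2: "\<not> Yg V S u v"
    proof
      assume "Yg V S u v"
      then have "odd_tri S w u v" by (rule Yg_odd) (use u vw in auto)
      then show False using e by (metis odd_tri_cyc)
    qed
    have 3: "\<not> Yg V S u w"
    proof
      assume "Yg V S u w"
      then have "odd_tri S v u w" by (rule Yg_odd) (use u vw in auto)
      then show False using e by (metis odd_tri_perm1)
    qed
    show ?thesis using tT[of u v w] u vw e 1 2 3 by auto
  qed
  then show ?thesis unfolding Xg_def using vw by blast
qed

lemma P1b:
  assumes y: "Yg V S v w"
  shows "Xg V (S \<triangle> Yset V S) v w"
proof -
  have vw: "v \<in> V" "w \<in> V" "v \<noteq> w" using Yg_V[OF y] by auto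
  have "\<not> odd_tri (S \<triangle> Yset V S) u v w" if u: "u \<in> V - {v,w}" for u
  proof -
    have e: "odd_tri S u v w" using Yg_odd[OF y] u by auto
    have 2: "\<not> Yg V S u v"
    proof
      assume "Yg V S u v"
      then have "Yg V S v u" using Yg_sym by metis
      then show False using F1 y u by blast
    qed
    have 3: "\<not> Yg V S u w"
    proof
      assume "Yg V S u w"
      then have a: "Yg V S w u" using Yg_sym by metis
      have "Yg V S w v" using y Yg_sym by metis
      then show False using F1 a u by blast
    qed
    show ?thesis using tT[of u v w] u vw e y 2 3 by auto
  qed
  then show ?thesis unfolding Xg_def using vw by blast
qed

lemma P2a:
  assumes x: "Xg V (S \<triangle> Yset V S) a b" and nab: "\<not> Yg V S a b"
    and aa: "Yg V S a a'" and nb: "\<forall>c. \<not> Yg V S b c"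
  shows False
proof -
  have ab: "a \<in> V" "b \<in> V" "a \<noteq> b" using Xg_V[OF x] by auto
  have a': "a' \<in> V" "a' \<noteq> a" using Yg_V[OF aa] by auto
  have a'b: "a' \<noteq> b" using nab aa by auto
  have all: "\<forall>y\<in>V-{a,b}. odd_tri S a b y \<longleftrightarrow> y \<in> {a'}"
  proof
    fix y assume y: "y \<in> V - {a,b}"
    have t0: "\<not> odd_tri (S \<triangle> Yset V S) y a b" using Xg_even[OF x] y by auto
    then have t: "\<not> odd_tri (S \<triangle> Yset V S) a b y" by (metis odd_tri_cyc)
    have ya: "Yg V S a y \<longleftrightarrow> y = a'" using F1[OF aa] aa by blast
    show "odd_tri S a b y \<longleftrightarrow> y \<in> {a'}" using tT[of a b y] t y ab nab nb ya by auto
  qed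
  have "n_odd V S a b = card {a'}" by (rule n_odd_cong[OF all]) (use a' a'b in auto)
  then have "n_odd V S b a = 1" using n_odd_sym[of V S a b] by simp
  moreover have "2 * n_odd V S b a + 1 = card V" by (rule Yg_cnt[OF aa]) (use ab a'b in auto)
  ultimately show False using n4 by simp
qed

lemma P2b:
  assumes x: "Xg V (S \<triangle> Yset V S) a b" and nab: "\<not> Yg V S a b"
    and aa: "Yg V S a a'" and bb: "Yg V S b b'"
  shows False
proof -
  have ab: "a \<in> V" "b \<in> V" "a \<noteq> b" using Xg_V[OF x] by auto
  have a': "a' \<in> V" "a' \<noteq> a" using Yg_V[OF aa] by auto
  have b': "b' \<in> V" "b' \<noteq> b" using Yg_V[OF bb] by auto
  have a'b: "a' \<noteq> b" using nab aa by auto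
  have b'a: "b' \<noteq> a" using nab bb Yg_sym by metis
  have a'b': "a' \<noteq> b'"
  proof
    assume eq: "a' = b'"
    have "Yg V S a' a" using aa Yg_sym by metis
    moreover have "Yg V S a' b" using bb Yg_sym eq by metis
    ultimately show False using F1 ab by blast
  qed
  have all: "\<forall>y\<in>V-{a,b}. odd_tri S a b y \<longleftrightarrow> y \<in> {a',b'}"
  proof
    fix y assume y: "y \<in> V - {a,b}"
    have t0: "\<not> odd_tri (S \<triangle> Yset V S) y a b" using Xg_even[OF x] y by auto
    then have t: "\<not> odd_tri (S \<triangle> Yset V S) a b y" by (metis odd_tri_cyc)
    have ya: "Yg V S a y \<longleftrightarrow> y = a'" using F1[OF aa] aa by blast
    have yb: "Yg V S b y \<longleftrightarrow> y = b'" using F1[OF bb] bb by blast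
    show "odd_tri S a b y \<longleftrightarrow> y \<in> {a',b'}" using tT[of a b y] t y ab nab ya yb a'b' by auto
  qed
  have "n_odd V S a b = card {a',b'}" by (rule n_odd_cong[OF all]) (use a' b' a'b b'a in auto)
  then have "n_odd V S b a = 2" using n_odd_sym[of V S a b] a'b' by simp
  moreover have "2 * n_odd V S b a + 1 = card V" by (rule Yg_cnt[OF aa]) (use ab a'b in auto)
  ultimately have n5: "card V = 5" by simp
  have "\<not> V \<subseteq> {a,a',b,b'}"
  proof
    assume "V \<subseteq> {a,a',b,b'}"
    then have "card V \<le> card {a,a',b,b'}" by (intro card_mono) auto
    then show False using card4_le[of a a' b b'] n5 by simp
  qed
  then obtain c where c: "c \<in> V" "c \<notin> {a,a',b,b'}" by blast
  have abc: "\<not> odd_tri S a b c" using all c by auto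
  have abb': "odd_tri S a b b'" using all b' b'a by auto
  have "odd_tri S c b b'" by (rule Yg_odd[OF bb]) (use c in auto)
  then have bb'c: "odd_tri S b b' c" by (metis odd_tri_cyc)
  have d: "distinct [a,b,b',c]" using c ab b' b'a by auto
  have ab'c: "\<not> odd_tri S a b' c" using cocycle[OF d, of S] abc abb' bb'c by auto
  have "2 * n_odd V S c a + 1 = card V" by (rule Yg_cnt[OF aa]) (use c in auto)
  then have nca: "n_odd V S c a = 2" using n5 by simp
  have sub: "{x \<in> V - {c, a}. odd_tri S c a x} \<subseteq> V - {c,a,b,b'}"
  proof
    fix x assume x: "x \<in> {x \<in> V - {c, a}. odd_tri S c a x}"
    have "x \<noteq> b" using x abc by (metis (mono_tags, lifting) mem_Collect_eq odd_tri_cyc)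
    moreover have "x \<noteq> b'" using x ab'c by (metis (mono_tags, lifting) mem_Collect_eq odd_tri_cyc)
    ultimately show "x \<in> V - {c,a,b,b'}" using x by auto
  qed
  have "card {c,a,b,b'} = 4" using d by auto
  moreover have "{c,a,b,b'} \<subseteq> V" using c ab b' by auto
  ultimately have "card (V - {c,a,b,b'}) = 1" using n5 fin by (simp add: card_Diff_subset)
  moreover have "n_odd V S c a \<le> card (V - {c,a,b,b'})"
    unfolding n_odd_def by (rule card_mono[OF _ sub]) (use fin in auto)
  ultimately show False using nca by simp
qed

lemma P2:
  assumes x: "Xg V (S \<triangle> Yset V S) a b"
  shows "Xg V S a b \<or> Yg V S a b"
proof (cases "Yg V S a b")
  case True then show ?thesis by simp
next
  case nab: False
  have ab: "a \<in> V" "b \<in> V" "a \<noteq> b" using Xg_V[OF x] by auto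
  show ?thesis
  proof (cases "\<exists>a'. Yg V S a a'")
    case True
    then obtain a' where aa: "Yg V S a a'" by blast
    show ?thesis
    proof (cases "\<exists>b'. Yg V S b b'")
      case True
      then obtain b' where "Yg V S b b'" by blast
      then show ?thesis using P2b[OF x nab aa] by blast
    next
      case False
      then show ?thesis using P2a[OF x nab aa] by blast
    qed
  next
    case na: False
    show ?thesis
    proof (cases "\<exists>b'. Yg V S b b'")
      case True
      then obtain b' where bb: "Yg V S b b'" by blast
      have x': "Xg V (S \<triangle> Yset V S) b a" using x Xg_sym by metis
      have nba: "\<not> Yg V S b a" using nab Yg_sym by metis
      show ?thesis using P2a[OF x' nba bb] na by blast
    next
      case nb: False
      have "\<not> odd_tri S y a b" if y: "y \<in> V - {a,b}" for y
      proof -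
        have t0: "\<not> odd_tri (S \<triangle> Yset V S) y a b" using Xg_even[OF x] y by auto
        then have t: "\<not> odd_tri (S \<triangle> Yset V S) a b y" by (metis odd_tri_cyc)
        then have "\<not> odd_tri S a b y" using tT[of a b y] y ab nab na nb by auto
        then show ?thesis by (metis odd_tri_cyc)
      qed
      then show ?thesis unfolding Xg_def using ab by blast
    qed
  qed
qed

lemma P3a:
  assumes y: "Yg V (S \<triangle> Yset V S) v w" and vv: "Yg V S v v'"
  shows False
proof (cases "v' = w")
  case True
  have x: "Xg V (S \<triangle> Yset V S) v w" using P1b vv True by blast
  have vw: "v \<in> V" "w \<in> V" "v \<noteq> w" using Yg_V[OF y] by auto
  have "card {v,w} < card V" using vw n4 by simp
  then have "\<not> V \<subseteq> {v,w}" using card_mono[of "{v,w}" V] by auto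
  then obtain u where u: "u \<in> V" "u \<notin> {v,w}" by blast
  show False using Yg_odd[OF y u(1)] Xg_even[OF x u(1)] u by auto
next
  case False
  have vw: "v \<in> V" "w \<in> V" "v \<noteq> w" using Yg_V[OF y] by auto
  have v': "v' \<in> V" "v' \<noteq> v" using Yg_V[OF vv] by auto
  have t: "odd_tri (S \<triangle> Yset V S) v' v w" by (rule Yg_odd[OF y]) (use v' False in auto)
  have o: "odd_tri S v' v w"
  proof -
    have "odd_tri S w v v'" by (rule Yg_odd[OF vv]) (use vw False in auto)
    then show ?thesis using odd_tri_cyc[of S w v v'] odd_tri_cyc[of S v v' w] odd_tri_perm2[of S v' w v] by simp
  qed
  have 1: "Yg V S v' v" using vv Yg_sym by metis
  have 2: "\<not> Yg V S v' w" using F1[OF 1] vw by blast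
  have 3: "\<not> Yg V S v w" using F1[OF vv] False by blast
  show False using tT[of v' v w] t o 1 2 3 v' vw False by auto
qed

lemma P3:
  assumes ne: "Yset V S \<noteq> {}" and y: "Yg V (S \<triangle> Yset V S) v w"
  shows False
proof -
  have vw: "v \<in> V" "w \<in> V" "v \<noteq> w" using Yg_V[OF y] by auto
  have nv: "\<forall>c. \<not> Yg V S v c" using P3a[OF y] by blast
  have y': "Yg V (S \<triangle> Yset V S) w v" using y Yg_sym by metis
  have nw: "\<forall>c. \<not> Yg V S w c" using P3a[OF y'] by blast
  obtain e where "e \<in> Yset V S" using ne by blast
  then obtain a b where ab: "Yg V S a b" using Yset_elem[OF fin] by blast
  have abV: "a \<in> V" "b \<in> V" "a \<noteq> b" using Yg_V[OF ab] by auto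
  have ba: "Yg V S b a" using ab Yg_sym by metis
  have av: "a \<noteq> v" "a \<noteq> w" using nv nw ab by auto
  have bv: "b \<noteq> v" "b \<noteq> w" using nv nw ba by auto
  have c1: "2 * n_odd V (S \<triangle> Yset V S) a v + 1 = card V" by (rule Yg_cnt[OF y]) (use abV av in auto)
  have "2 * n_odd V S v a + 1 = card V" by (rule Yg_cnt[OF ab]) (use vw av bv in auto)
  then have c2: "2 * n_odd V S a v + 1 = card V" using n_odd_sym[of V S v a] by simp
  have avb: "odd_tri S a v b"
  proof -
    have "odd_tri S v a b" by (rule Yg_odd[OF ab]) (use vw av bv in auto)
    then show "odd_tri S a v b" by (metis odd_tri_perm1)
  qed
  have seteq: "{x \<in> V - {a, v}. odd_tri (S \<triangle> Yset V S) a v x} = {x \<in> V - {a, v}. odd_tri S a v x} - {b}"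
  proof (intro set_eqI iffI)
    fix x
    assume x: "x \<in> {x \<in> V - {a, v}. odd_tri (S \<triangle> Yset V S) a v x}"
    have xb: "Yg V S a x \<longleftrightarrow> x = b" using F1[OF ab] ab by blast
    have "\<not> Yg V S a v" using nv Yg_sym by metis
    then show "x \<in> {x \<in> V - {a, v}. odd_tri S a v x} - {b}"
      using x tT[of a v x] xb nv av avb by auto
  next
    fix x
    assume x: "x \<in> {x \<in> V - {a, v}. odd_tri S a v x} - {b}"
    have xb: "Yg V S a x \<longleftrightarrow> x = b" using F1[OF ab] ab by blast
    have "\<not> Yg V S a v" using nv Yg_sym by metis
    then show "x \<in> {x \<in> V - {a, v}. odd_tri (S \<triangle> Yset V S) a v x}"
      using x tT[of a v x] xb nv av avb by auto
  qed
  have bin: "b \<in> {x \<in> V - {a, v}. odd_tri S a v x}"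
  proof -
    have "odd_tri S v a b" by (rule Yg_odd[OF ab]) (use vw av bv in auto)
    then have "odd_tri S a v b" by (metis odd_tri_perm1)
    then show ?thesis using abV bv by auto
  qed
  have "n_odd V (S \<triangle> Yset V S) a v = n_odd V S a v - 1"
    unfolding n_odd_def seteq using bin fin by (simp add: card_Diff_singleton)
  moreover have "n_odd V S a v \<ge> 1"
  proof -
    have "finite {x \<in> V - {a, v}. odd_tri S a v x}" using fin by simp
    then have "card {x \<in> V - {a, v}. odd_tri S a v x} > 0" using bin card_gt_0_iff by blast
    then show ?thesis unfolding n_odd_def by simp
  qed
  ultimately show False using c1 c2 by simp
qed

end

theorem lemma3p5:
  fixes V :: "'a set" and \<Sigma> :: "'a set set"
  assumes "finite V" and "card V \<ge> 4"
    and "\<Sigma> \<subseteq> Kedges V"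
    and "Yset V \<Sigma> \<noteq> {}"
  shows "Xset V \<Sigma> \<union> Yset V \<Sigma> = Xset V (\<Sigma> \<triangle> Yset V \<Sigma>) \<and>
         Yset V (\<Sigma> \<triangle> Yset V \<Sigma>) = {}"
proof
  show "Xset V \<Sigma> \<union> Yset V \<Sigma> = Xset V (\<Sigma> \<triangle> Yset V \<Sigma>)"
  proof (intro equalityI subsetI)
    fix e assume "e \<in> Xset V \<Sigma> \<union> Yset V \<Sigma>"
    then show "e \<in> Xset V (\<Sigma> \<triangle> Yset V \<Sigma>)"
    proof
      assume "e \<in> Xset V \<Sigma>"
      then obtain v w where e: "e = {v,w}" and x: "Xg V \<Sigma> v w" using Xset_elem by metis
      have "Xg V (\<Sigma> \<triangle> Yset V \<Sigma>) v w" by (rule P1[OF assms(1,2) x])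
      then have "{v,w} \<in> Xset V (\<Sigma> \<triangle> Yset V \<Sigma>)" by (rule Xset_I)
      then show ?thesis using e by simp
    next
      assume "e \<in> Yset V \<Sigma>"
      then obtain v w where e: "e = {v,w}" and y: "Yg V \<Sigma> v w" using Yset_elem[OF assms(1)] by metis
      have "Xg V (\<Sigma> \<triangle> Yset V \<Sigma>) v w" by (rule P1b[OF assms(1,2) y])
      then have "{v,w} \<in> Xset V (\<Sigma> \<triangle> Yset V \<Sigma>)" by (rule Xset_I)
      then show ?thesis using e by simp
    qed
  next
    fix e assume "e \<in> Xset V (\<Sigma> \<triangle> Yset V \<Sigma>)"
    then obtain v w where e: "e = {v,w}" and x: "Xg V (\<Sigma> \<triangle> Yset V \<Sigma>) v w" using Xset_elem by metis
    have "Xg V \<Sigma> v w \<or> Yg V \<Sigma> v w" by (rule P2[OF assms(1,2) x])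
    then show "e \<in> Xset V \<Sigma> \<union> Yset V \<Sigma>"
    proof
      assume "Xg V \<Sigma> v w"
      then have "{v,w} \<in> Xset V \<Sigma>" by (rule Xset_I)
      then show ?thesis using e by simp
    next
      assume "Yg V \<Sigma> v w"
      then have "{v,w} \<in> Yset V \<Sigma>" by (rule Yset_I[OF assms(1)])
      then show ?thesis using e by simp
    qed
  qed
next
  show "Yset V (\<Sigma> \<triangle> Yset V \<Sigma>) = {}"
  proof (rule ccontr)
    assume "Yset V (\<Sigma> \<triangle> Yset V \<Sigma>) \<noteq> {}"
    then obtain e where "e \<in> Yset V (\<Sigma> \<triangle> Yset V \<Sigma>)" by blast
    then obtain v w where y: "Yg V (\<Sigma> \<triangle> Yset V \<Sigma>) v w" using Yset_elem[OF assms(1)] by metis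
    show False by (rule P3[OF assms(1,2,4) y])
  qed
qed

end
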